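(* Let $q$ be a prime power, $\chi$ a multiplicative character of $\mathbb{F}_q^*$ and $\lambda$ an additive character of $\mathbb{F}_q$. For every $n\ge 1$, \[ \sum_{g\in GL(n,q)}\chi(\det g)\,\lambda(\operatorname{tr} g) = \begin{cases} |GL(n,q)| & \text{if } \lambda,\chi \text{ are both trivial},\\ 0 & \text{if } \lambda \text{ is trivial and } \chi \text{ nontrivial},\\ q^{\binom n2}\,G(\chi,\lambda)^n & \text{if } \lambda \text{ is nontrivial}.\end{cases}\]
   Context: $GL(n,q)$ is the group of invertible $n\times n$ matrices over $\mathbb{F}_q$. The Gauss sum is $G(\chi,\lambda)=\sum_{x\in\mathbb{F}_q^*}\chi(x)\lambda(x)$. *)

theory Defs
  imports "HOL-Analysis.Analysis"
begin

definition mult_char :: "('a::field \<Rightarrow> complex) \<Rightarrow> bool" where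
  "mult_char chi \<longleftrightarrow> chi 1 = 1 \<and> (\<forall>x y. x \<noteq> 0 \<longrightarrow> y \<noteq> 0 \<longrightarrow> chi (x * y) = chi x * chi y)"

definition add_char :: "('a::field \<Rightarrow> complex) \<Rightarrow> bool" where
  "add_char psi \<longleftrightarrow> psi 0 = 1 \<and> (\<forall>x y. psi (x + y) = psi x * psi y)"

definition trivial_mult_char :: "('a::field \<Rightarrow> complex) \<Rightarrow> bool" where
  "trivial_mult_char chi \<longleftrightarrow> (\<forall>x. x \<noteq> 0 \<longrightarrow> chi x = 1)"

definition trivial_add_char :: "('a::field \<Rightarrow> complex) \<Rightarrow> bool" where
  "trivial_add_char psi \<longleftrightarrow> (\<forall>x. psi x = 1)"

definition gauss_sum :: "('a::{field,finite} \<Rightarrow> complex) \<Rightarrow> ('a \<Rightarrow> complex) \<Rightarrow> complex" where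
  "gauss_sum chi psi = (\<Sum>x\<in>{x. x \<noteq> 0}. chi x * psi x)"

text \<open>GL(n,q) with n = CARD('n), q = CARD('a).\<close>
definition GL :: "('a::{field,finite}^'n^'n) set" where
  "GL = {A. invertible A}"

end

theory Submission
  imports Defs
begin


lemma det_lower_e:
  fixes A :: "'a::comm_ring_1^'n^'n" and e :: "'n::finite \<Rightarrow> nat"
  assumes inj: "inj e" and ld: "\<And>i j. e i < e j \<Longrightarrow> A$i$j = 0"
  shows "det A = prod (\<lambda>i. A$i$i) (UNIV:: 'n set)"
proof -
  let ?U = "UNIV:: 'n set"
  let ?PU = "{p. p permutes ?U}"
  let ?pp = "\<lambda>p. of_int (sign p) * prod (\<lambda>i. A$i$p i) (UNIV :: 'n set)"
  have fU: "finite ?U"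
    by simp
  have id0: "{id} \<subseteq> ?PU"
    by (auto simp: permutes_id)
  have p0: "\<forall>p \<in> ?PU - {id}. ?pp p = 0"
  proof
    fix p
    assume p: "p \<in> ?PU - {id}"
    have "\<exists>i. e i < e (p i)"
    proof (rule ccontr)
      assume "\<not> ?thesis"
      then have le: "\<And>i. e (p i) \<le> e i" by (simp add: not_less)
      have pp: "p permutes ?U" using p by simp
      have "(\<Sum>i\<in>?U. e (p i)) = (\<Sum>i\<in>?U. e i)"
        using sum.permute[OF pp, of e] by (simp add: comp_def)
      have "\<forall>i\<in>?U. e (p i) = e i"
      proof (rule ccontr)
        assume "\<not> (\<forall>i\<in>?U. e (p i) = e i)"
        then have "\<exists>i\<in>?U. e (p i) < e i" using le by (meson le_neq_implies_less)
        then have "(\<Sum>i\<in>?U. e (p i)) < (\<Sum>i\<in>?U. e i)"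
          using le by (intro sum_strict_mono_ex1) auto
        with \<open>(\<Sum>i\<in>?U. e (p i)) = (\<Sum>i\<in>?U. e i)\<close> show False by simp
      qed
      then have "p = id" using inj by (auto simp: inj_def)
      then show False using p by simp
    qed
    then obtain i where i: "e i < e (p i)" by blast
    from ld[OF i] have "\<exists>i \<in> ?U. A$i$p i = 0"
      by blast
    with prod_zero[OF fU] show "?pp p = 0"
      by force
  qed
  from sum.mono_neutral_cong_left[OF finite_permutations[OF fU] id0 p0] show ?thesis
    unfolding det_def by (simp add: sign_id)
qed

lemma chi_prod:
  assumes "mult_char chi" "finite A" "\<forall>i\<in>A. x i \<noteq> 0"
  shows "chi (prod x A) = (\<Prod>i\<in>A. chi (x i))"
  using assms(2,3)
proof (induction A rule: finite_induct)
  case empty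
  then show ?case using assms(1) by (simp add: mult_char_def)
next
  case (insert a A)
  have "prod x A \<noteq> 0" using insert by auto
  then show ?case using insert assms(1) by (simp add: mult_char_def)
qed

lemma psi_sum:
  assumes "add_char psi"
  shows "psi (sum x A) = (\<Prod>i\<in>A. psi (x i))"
proof (cases "finite A")
  case True
  then show ?thesis
    by (induction A rule: finite_induct) (use assms in \<open>auto simp: add_char_def\<close>)
next
  case False
  then show ?thesis using assms by (simp add: add_char_def)
qed

definition Ulow :: "('n \<Rightarrow> nat) \<Rightarrow> ('a::field^'n^'n) set" where
  "Ulow e = {u. (\<forall>i. u$i$i = 1) \<and> (\<forall>i j. e i < e j \<longrightarrow> u$i$j = 0)}"

lemma trace_single:
  fixes M :: "'a::field^'n^'n"
  shows "trace ((\<chi> i j. if i = a \<and> j = b then t else 0) ** M) = t * M$b$a"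
proof -
  have "(\<Sum>k\<in>UNIV. (if i = a \<and> k = b then t else 0) * M$k$i) = (if i = a then t * M$b$a else 0)" for i
    by (cases "i = a") (simp_all add: if_distrib[of "\<lambda>x. x * _"] cong: if_cong)
  then show ?thesis by (simp add: trace_def matrix_matrix_mult_def)
qed

lemma matrix_add_rdistrib': "((A::'a::semiring_1^'m^'n) + B) ** C = A ** C + B ** C"
  by (simp add: vec_eq_iff matrix_matrix_mult_def distrib_right sum.distrib)

lemma orth:
  fixes psi :: "'a::{field,finite} \<Rightarrow> complex" and M :: "'a^'n^'n"
  assumes psi: "add_char psi" "\<not> trivial_add_char psi"
    and ab: "e b < e a" and Mba: "M$b$a \<noteq> 0"
  shows "(\<Sum>u\<in>Ulow e. psi (trace (u ** M))) = 0"
proof -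
  obtain y where y: "psi y \<noteq> 1" using psi(2) by (auto simp: trivial_add_char_def)
  define t where "t = y / M$b$a"
  define D where "D = (\<lambda>s::'a. (\<chi> i j. if i = a \<and> j = b then s else 0) :: 'a^'n^'n)"
  have ab': "a \<noteq> b" using ab by auto
  have DU: "u + D s \<in> Ulow e" if "u \<in> Ulow e" for u s
    using that ab ab' by (auto simp: Ulow_def D_def)
  have DD: "u + D t + D (-t) = u" for u
    by (simp add: D_def vec_eq_iff)
  have DD2: "u + D (-t) + D t = u" for u
    by (simp add: D_def vec_eq_iff)
  have bij: "bij_betw (\<lambda>u. u + D t) (Ulow e) (Ulow e)"
    by (rule bij_betw_byWitness[where f'="\<lambda>u. u + D (-t)"]) (use DU DD DD2 in auto)
  have tr: "trace ((u + D t) ** M) = trace (u ** M) + y" for u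
    using Mba by (simp add: matrix_add_rdistrib' trace_add D_def trace_single t_def)
  have "(\<Sum>u\<in>Ulow e. psi (trace (u ** M))) = (\<Sum>u\<in>Ulow e. psi (trace ((u + D t) ** M)))"
    using sum.reindex_bij_betw[OF bij, of "\<lambda>u. psi (trace (u ** M))"] by simp
  also have "\<dots> = (\<Sum>u\<in>Ulow e. psi (trace (u ** M))) * psi y"
    using psi(1) by (simp add: tr add_char_def sum_distrib_right)
  finally show ?thesis using y
    by (metis mult.right_neutral mult_cancel_left)
qed

definition Lowt :: "('n \<Rightarrow> nat) \<Rightarrow> ('a::field^'n^'n) set" where
  "Lowt e = {M. \<forall>i j. e i < e j \<longrightarrow> M$i$j = 0}"

lemma trace_lowt:
  fixes M u :: "'a::field^'n^'n"
  assumes inj: "inj e" and u: "u \<in> Ulow e" and M: "M \<in> Lowt e"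
  shows "trace (u ** M) = trace M"
proof -
  have "(\<Sum>k\<in>UNIV. u$i$k * M$k$i) = M$i$i" for i
  proof -
    have "(\<Sum>k\<in>UNIV. u$i$k * M$k$i) = (\<Sum>k\<in>UNIV. if k = i then M$i$i else 0)"
    proof (rule sum.cong)
      fix k assume "k \<in> (UNIV :: 'n set)"
      show "u$i$k * M$k$i = (if k = i then M$i$i else 0)"
      proof (cases "k = i")
        case True then show ?thesis using u by (simp add: Ulow_def)
      next
        case False
        then have "e i < e k \<or> e k < e i" using inj by (metis inj_def linorder_neqE_nat)
        then show ?thesis using u M False by (auto simp: Ulow_def Lowt_def)
      qed
    qed simp
    then show ?thesis by simp
  qed
  then show ?thesis by (simp add: trace_def matrix_matrix_mult_def)
qed

lemma GL_det: "(GL :: ('a::{field,finite}^'n^'n) set) = {A. det A \<noteq> 0}"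
  by (simp add: GL_def invertible_det_nz)

lemma det_Ulow:
  assumes "inj e" "u \<in> Ulow e"
  shows "det (u :: 'a::field^'n^'n) = 1"
  using assms by (subst det_lower_e[of e]) (auto simp: Ulow_def)

lemma sum_GL_shift:
  fixes u :: "'a::{field,finite}^'n^'n"
  assumes "det u \<noteq> 0"
  shows "(\<Sum>g\<in>GL. f (u ** g)) = (\<Sum>g\<in>GL. f g)"
proof -
  have "invertible u" using assms by (simp add: invertible_det_nz)
  then obtain v where v: "u ** v = mat 1" "v ** u = mat 1" unfolding invertible_def by blast
  have "bij_betw (\<lambda>g. u ** g) GL GL"
  proof (rule bij_betw_byWitness[where f'="\<lambda>g. v ** g"])
    show "\<forall>a\<in>GL. v ** (u ** a) = a" using v by (simp add: matrix_mul_assoc)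
    show "\<forall>a\<in>GL. u ** (v ** a) = a" using v by (simp add: matrix_mul_assoc)
    show "(**) u ` GL \<subseteq> GL" using assms by (auto simp: GL_det det_mul)
    have "det v \<noteq> 0" using v by (metis det_I det_mul mult_zero_right one_neq_zero)
    then show "(**) v ` GL \<subseteq> GL" by (auto simp: GL_det det_mul)
  qed
  then show ?thesis using sum.reindex_bij_betw by blast
qed

lemma reduce:
  fixes chi psi :: "'a::{field,finite} \<Rightarrow> complex" and e :: "'n::finite \<Rightarrow> nat"
  assumes inj: "inj e" and psi: "add_char psi" "\<not> trivial_add_char psi"
  shows "(\<Sum>g\<in>(GL :: ('a^'n^'n) set). chi (det g) * psi (trace g)) =
         (\<Sum>g\<in>GL \<inter> Lowt e. chi (det g) * psi (trace g))"
proof -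
  let ?f = "\<lambda>g::'a^'n^'n. chi (det g) * psi (trace g)"
  let ?U = "Ulow e :: ('a^'n^'n) set"
  have inner: "(\<Sum>u\<in>?U. psi (trace (u ** g))) = (if g \<in> Lowt e then of_nat (card ?U) * psi (trace g) else 0)" for g :: "'a^'n^'n"
  proof (cases "g \<in> Lowt e")
    case True
    then show ?thesis using trace_lowt[OF inj _ True] by simp
  next
    case False
    then obtain i j where ij: "e i < e j" "g$i$j \<noteq> 0" by (auto simp: Lowt_def)
    show ?thesis using orth[OF psi ij] False by simp
  qed
  have "of_nat (card ?U) * (\<Sum>g\<in>GL. ?f g) = (\<Sum>u\<in>?U. \<Sum>g\<in>GL. ?f (u ** g))"
  proof -
    have "(\<Sum>u\<in>?U. \<Sum>g\<in>GL. ?f (u ** g)) = (\<Sum>u\<in>?U. \<Sum>g\<in>GL. ?f g)"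
      by (rule sum.cong[OF refl], rule sum_GL_shift) (simp add: det_Ulow[OF inj])
    then show ?thesis by simp
  qed
  also have "\<dots> = (\<Sum>g\<in>GL. \<Sum>u\<in>?U. chi (det g) * psi (trace (u ** g)))"
    using det_Ulow[OF inj] by (subst sum.swap) (intro sum.cong refl, simp add: det_mul det_Ulow[OF inj])
  also have "\<dots> = (\<Sum>g\<in>GL. chi (det g) * (if g \<in> Lowt e then of_nat (card ?U) * psi (trace g) else 0))"
    by (simp add: sum_distrib_left[symmetric] inner)
  also have "\<dots> = of_nat (card ?U) * (\<Sum>g\<in>GL \<inter> Lowt e. ?f g)"
  proof -
    have "(\<Sum>g\<in>GL \<inter> Lowt e. ?f g) = (\<Sum>g\<in>{g\<in>GL. g \<in> Lowt e}. ?f g)"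
      by (metis Int_def)
    also have "\<dots> = (\<Sum>g\<in>GL. if g \<in> Lowt e then ?f g else 0)"
      by (rule sum.inter_filter) simp
    finally show ?thesis by (simp add: sum_distrib_left if_distrib algebra_simps cong: if_cong)
  qed
  finally have eq: "of_nat (card ?U) * (\<Sum>g\<in>GL. ?f g) = of_nat (card ?U) * (\<Sum>g\<in>GL \<inter> Lowt e. ?f g)" .
  have "mat 1 \<in> ?U" by (simp add: Ulow_def mat_def)
  then have "card ?U \<noteq> 0" by (auto simp: card_eq_0_iff)
  then show ?thesis using eq by simp
qed

definition Slow :: "('n \<Rightarrow> nat) \<Rightarrow> ('a::field^'n^'n) set" where
  "Slow e = {N. \<forall>i j. \<not> e j < e i \<longrightarrow> N$i$j = 0}"

lemma lowt_sum:
  fixes chi psi :: "'a::{field,finite} \<Rightarrow> complex" and e :: "'n::finite \<Rightarrow> nat"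
  assumes inj: "inj e" and chi: "mult_char chi" and psi: "add_char psi"
  shows "(\<Sum>g\<in>(GL :: ('a^'n^'n) set) \<inter> Lowt e. chi (det g) * psi (trace g)) =
         of_nat (card (Slow e :: ('a^'n^'n) set)) * gauss_sum chi psi ^ CARD('n)"
proof -
  let ?D = "{d :: 'n \<Rightarrow> 'a. \<forall>i. d i \<noteq> 0}"
  let ?S = "Slow e :: ('a^'n^'n) set"
  let ?h = "\<lambda>d::'n \<Rightarrow> 'a. \<Prod>i\<in>UNIV. chi (d i) * psi (d i)"
  define phi where "phi = (\<lambda>(d::'n \<Rightarrow> 'a, N::'a^'n^'n). (\<chi> i j. if i = j then d i else N$i$j) :: 'a^'n^'n)"
  define phi' where "phi' = (\<lambda>g::'a^'n^'n. ((\<lambda>i. g$i$i), (\<chi> i j. if e j < e i then g$i$j else 0) :: 'a^'n^'n))"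
  have detL: "det g = (\<Prod>i\<in>UNIV. g$i$i)" if "g \<in> Lowt e" for g :: "'a^'n^'n"
    using that by (intro det_lower_e[OF inj]) (auto simp: Lowt_def)
  have F: "chi (det g) * psi (trace g) = ?h (\<lambda>i. g$i$i)" if "g \<in> GL \<inter> Lowt e" for g :: "'a^'n^'n"
  proof -
    have nz: "\<forall>i\<in>UNIV. g$i$i \<noteq> 0" using that detL[of g] by (auto simp: GL_det)
    show ?thesis using that detL[of g] chi_prod[OF chi _ nz] psi_sum[OF psi, of "\<lambda>i. g$i$i" UNIV]
      by (simp add: trace_def prod.distrib)
  qed
  have bij: "bij_betw phi (?D \<times> ?S) (GL \<inter> Lowt e)"
  proof (rule bij_betw_byWitness[where f'=phi'])
    show "\<forall>a\<in>?D \<times> ?S. phi' (phi a) = a"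
      by (auto simp: phi_def phi'_def Slow_def vec_eq_iff)
    show "\<forall>a\<in>GL \<inter> Lowt e. phi (phi' a) = a"
    proof
      fix g :: "'a^'n^'n" assume g: "g \<in> GL \<inter> Lowt e"
      have "phi (phi' g) $ i $ j = g$i$j" for i j
      proof (cases "i = j")
        case False
        then have "e i \<noteq> e j" using inj by (auto simp: inj_def)
        then show ?thesis using g False by (auto simp: Lowt_def phi_def phi'_def)
      qed (simp add: phi_def phi'_def)
      then show "phi (phi' g) = g" by (simp add: vec_eq_iff)
    qed
    show "phi ` (?D \<times> ?S) \<subseteq> GL \<inter> Lowt e"
    proof
      fix g assume "g \<in> phi ` (?D \<times> ?S)"
      then obtain d N where dN: "d \<in> ?D" "N \<in> ?S" and g: "g = phi (d, N)" by auto
      have L: "g \<in> Lowt e" using dN g by (auto simp: phi_def Lowt_def Slow_def)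
      have "det g \<noteq> 0" using detL[OF L] dN g by (simp add: phi_def)
      then show "g \<in> GL \<inter> Lowt e" using L by (simp add: GL_det)
    qed
    show "phi' ` (GL \<inter> Lowt e) \<subseteq> ?D \<times> ?S"
    proof
      fix x assume "x \<in> phi' ` (GL \<inter> Lowt e)"
      then obtain g where g: "g \<in> GL \<inter> Lowt e" and x: "x = phi' g" by auto
      have "\<forall>i\<in>UNIV. g$i$i \<noteq> 0" using g detL[of g] by (auto simp: GL_det)
      then show "x \<in> ?D \<times> ?S" using x by (auto simp: phi'_def Slow_def)
    qed
  qed
  have "(\<Sum>g\<in>GL \<inter> Lowt e. chi (det g) * psi (trace g)) = (\<Sum>g\<in>GL \<inter> Lowt e. ?h (\<lambda>i. g$i$i))"
    using F by (rule sum.cong[OF refl])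
  also have "\<dots> = (\<Sum>x\<in>?D \<times> ?S. ?h (fst x))"
    using sum.reindex_bij_betw[OF bij, of "\<lambda>g. ?h (\<lambda>i. g$i$i)"]
    by (simp add: phi_def case_prod_beta)
  also have "\<dots> = (\<Sum>d\<in>?D. \<Sum>N\<in>?S. ?h d)"
    by (subst sum.cartesian_product) (simp add: case_prod_beta)
  also have "\<dots> = of_nat (card ?S) * (\<Sum>d\<in>?D. ?h d)"
    by (simp add: sum_distrib_left mult.commute)
  also have "(\<Sum>d\<in>?D. ?h d) = (\<Prod>i\<in>(UNIV::'n set). \<Sum>x\<in>{x::'a. x \<noteq> 0}. chi x * psi x)"
  proof -
    have "?D = PiE UNIV (\<lambda>_. {x. x \<noteq> 0})" by (auto simp: PiE_UNIV_domain)
    then show ?thesis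
      using prod_sum_PiE[of "UNIV::'n set" "\<lambda>_. {x::'a. x \<noteq> 0}" "\<lambda>i x. chi x * psi x"] by simp
  qed
  also have "\<dots> = gauss_sum chi psi ^ CARD('n)"
    by (simp add: gauss_sum_def)
  finally show ?thesis .
qed

lemma sum_lessThan_choose2: "(\<Sum>k<n. k) = n choose 2"
proof (induction n)
  case 0
  then show ?case by simp
next
  case (Suc n)
  have "Suc n choose 2 = (n choose 1) + (n choose 2)"
    by (simp add: numeral_2_eq_2)
  then show ?case using Suc by simp
qed

lemma card_Slow:
  fixes e :: "'n::finite \<Rightarrow> nat"
  assumes e: "bij_betw e UNIV {0..<CARD('n)}"
  shows "card (Slow e :: ('a::{field,finite}^'n^'n) set) = CARD('a) ^ (CARD('n) choose 2)"
proof -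
  define P where "P = {(i, j). e j < e i}"
  let ?S = "Slow e :: ('a^'n^'n) set"
  have bij: "bij_betw (\<lambda>N. restrict (\<lambda>(i,j). N$i$j) P) ?S (PiE P (\<lambda>_. (UNIV::'a set)))"
  proof (rule bij_betw_byWitness[where f'="\<lambda>f. (\<chi> i j. if e j < e i then f (i,j) else 0)"])
    show "\<forall>a\<in>?S. (\<chi> i j. if e j < e i then restrict (\<lambda>(i,j). a$i$j) P (i,j) else 0) = a"
      by (auto simp: Slow_def P_def vec_eq_iff)
    show "\<forall>a'\<in>PiE P (\<lambda>_. UNIV). restrict (\<lambda>(i,j). ((\<chi> i j. if e j < e i then a' (i,j) else 0) :: 'a^'n^'n)$i$j) P = a'"
      by (auto simp: P_def restrict_def PiE_def extensional_def fun_eq_iff)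
    show "(\<lambda>N. restrict (\<lambda>(i,j). N$i$j) P) ` ?S \<subseteq> PiE P (\<lambda>_. UNIV)"
      by auto
    show "(\<lambda>f. (\<chi> i j. if e j < e i then f (i,j) else 0)) ` PiE P (\<lambda>_. UNIV) \<subseteq> ?S"
      by (auto simp: Slow_def)
  qed
  have "card ?S = card (PiE P (\<lambda>_. (UNIV::'a set)))"
    using bij_betw_same_card[OF bij] .
  also have "\<dots> = CARD('a) ^ card P"
    by (simp add: card_PiE)
  also have "card P = CARD('n) choose 2"
  proof -
    have "P = Sigma UNIV (\<lambda>i. {j. e j < e i})" by (auto simp: P_def)
    then have "card P = (\<Sum>i\<in>UNIV. card {j. e j < e i})"
      by (simp add: card_SigmaI)
    also have "\<dots> = (\<Sum>i\<in>UNIV. e i)"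
    proof (rule sum.cong[OF refl])
      fix i :: 'n
      have "bij_betw e {j. e j < e i} {..<e i}"
      proof -
        have inj: "inj_on e {j. e j < e i}" using e by (auto simp: bij_betw_def inj_on_def)
        have "e ` {j. e j < e i} = {..<e i}"
        proof
          show "e ` {j. e j < e i} \<subseteq> {..<e i}" by auto
          show "{..<e i} \<subseteq> e ` {j. e j < e i}"
          proof
            fix k assume k: "k \<in> {..<e i}"
            have "e i < CARD('n)" using e by (auto simp: bij_betw_def)
            then have "k \<in> e ` UNIV" using k e by (auto simp: bij_betw_def)
            then show "k \<in> e ` {j. e j < e i}" using k by auto
          qed
        qed
        then show ?thesis using inj by (simp add: bij_betw_def)
      qed
      then show "card {j. e j < e i} = e i" using bij_betw_same_card by fastforce
    qed
    also have "\<dots> = (\<Sum>k\<in>{0..<CARD('n)}. k)"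
      using sum.reindex_bij_betw[OF e, of "\<lambda>k. k"] by simp
    also have "\<dots> = CARD('n) choose 2"
      using sum_lessThan_choose2 by (simp add: atLeast0LessThan)
    finally show ?thesis .
  qed
  finally show ?thesis .
qed

theorem theorem1:
  fixes chi psi :: "'a::{field,finite} \<Rightarrow> complex"
  assumes "mult_char chi" and "add_char psi"
  shows "(\<Sum>g\<in>(GL :: ('a^'n^'n) set). chi (det g) * psi (trace g)) =
    (if trivial_add_char psi \<and> trivial_mult_char chi then of_nat (card (GL :: ('a^'n^'n) set))
     else if trivial_add_char psi then 0
     else of_nat CARD('a) ^ (CARD('n) choose 2) * gauss_sum chi psi ^ CARD('n))"
proof -
  have psi1: "psi x = 1" if "trivial_add_char psi" for x using that by (simp add: trivial_add_char_def)
  show ?thesis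
  proof (cases "trivial_add_char psi")
    case tpsi: True
    show ?thesis
    proof (cases "trivial_mult_char chi")
      case True
      have "(\<Sum>g\<in>(GL :: ('a^'n^'n) set). chi (det g) * psi (trace g)) = (\<Sum>g\<in>(GL :: ('a^'n^'n) set). 1)"
        using True psi1[OF tpsi] by (intro sum.cong refl) (simp add: GL_det trivial_mult_char_def)
      then show ?thesis using True tpsi by simp
    next
      case False
      then obtain y where y: "y \<noteq> 0" "chi y \<noteq> 1" by (auto simp: trivial_mult_char_def)
      obtain k :: 'n where True by blast
      define D where "D = ((\<chi> i j. if i = j then (if i = k then y else 1) else 0) :: 'a^'n^'n)"
      have detD: "det D = y"
        by (subst det_diagonal) (auto simp: D_def prod.If_cases)
      have "(\<Sum>g\<in>(GL :: ('a^'n^'n) set). chi (det g)) = (\<Sum>g\<in>(GL :: ('a^'n^'n) set). chi (det (D ** g)))"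
        using sum_GL_shift[of D "\<lambda>g. chi (det g)"] detD y by simp
      also have "\<dots> = chi y * (\<Sum>g\<in>(GL :: ('a^'n^'n) set). chi (det g))"
        using assms(1) y by (simp add: det_mul detD mult_char_def sum_distrib_left GL_det)
      finally have "(\<Sum>g\<in>(GL :: ('a^'n^'n) set). chi (det g)) = 0"
        using y by (metis mult_cancel_right1 mult.commute)
      then show ?thesis using tpsi False psi1[OF tpsi] by simp
    qed
  next
    case False
    obtain e :: "'n \<Rightarrow> nat" where e: "bij_betw e UNIV {0..<card (UNIV :: 'n set)}"
      using ex_bij_betw_finite_nat[of "UNIV :: 'n set"] by auto
    have inj: "inj e" using e by (simp add: bij_betw_def)
    have "(\<Sum>g\<in>(GL :: ('a^'n^'n) set). chi (det g) * psi (trace g)) =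
          of_nat (card (Slow e :: ('a^'n^'n) set)) * gauss_sum chi psi ^ CARD('n)"
      using reduce[OF inj assms(2) False, of chi] lowt_sum[OF inj assms] by simp
    also have "\<dots> = of_nat CARD('a) ^ (CARD('n) choose 2) * gauss_sum chi psi ^ CARD('n)"
      using card_Slow[OF e, where 'a='a] by simp
    finally show ?thesis using False by simp
  qed
qed

end
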